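(* Let $C_m=\frac{1}{m+1}\binom{2m}{m}$ denote the $m$-th Catalan number and, for $i\ge1$, let $\alpha_i=C_{i-1}+\delta_{i,1}$, where $\delta_{i,1}$ is $1$ if $i=1$ and $0$ otherwise. Then for every integer $d\ge1$, $$\binom{2d}{d}=\sum_{\mathcal P}\alpha_{a_1}\alpha_{a_2}\cdots\alpha_{a_k},$$ where the sum is over all cyclic compositions $\mathcal P$ of $d$ (into any number $k\ge1$ of parts) and $a_1,\dots,a_k$ are the sizes of the parts of $\mathcal P$.
   Context: For $d\ge1$ let $C_d$ (the cycle graph) have vertex set $\mathbb Z_d$ and the $d$ edges $\{i,i+1\}$, $i\in\mathbb Z_d$ (a loop if $d=1$, two parallel edges if $d=2$). A cyclic composition of $d$ into $k$ parts ($1\le k\le d$) is a choice of a $k$-element subset of the $d$ edges of the cycle to delete; its parts are the $k$ connected components (each a path) of the remaining graph, and the size of a part is its number of vertices. There are $\binom dk$ cyclic compositions of $d$ into $k$ parts, hence $2^d-1$ cyclic compositions of $d$ in total. *)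

theory Defs
  imports Main
begin

text \<open>Catalan number C_m = binom(2m,m)/(m+1) (the division is exact).\<close>
definition catalan :: "nat \<Rightarrow> nat" where
  "catalan m = ((2*m) choose m) div (m + 1)"

definition alpha :: "nat \<Rightarrow> nat" where
  "alpha i = catalan (i - 1) + (if i = 1 then 1 else 0)"

text \<open>The cycle C_d has vertices {0..<d} (= Z_d) and edges e_i = {i, i+1 mod d}, i < d.
  A cyclic composition is a nonempty set S of deleted edges (indices in {0..<d}).
  For a deleted edge s in S, the component of the remaining graph starting at vertex
  s+1 consists of the vertices s+1, ..., s+t (mod d), where t is the cyclic distance
  to the next deleted edge.  These components are exactly the parts, in bijection with S.\<close>
definition cyc_gap :: "nat \<Rightarrow> nat set \<Rightarrow> nat \<Rightarrow> nat" where
  "cyc_gap d S s = (LEAST t. 0 < t \<and> (s + t) mod d \<in> S)"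

definition cyc_part :: "nat \<Rightarrow> nat set \<Rightarrow> nat \<Rightarrow> nat set" where
  "cyc_part d S s = {(s + j) mod d | j. 1 \<le> j \<and> j \<le> cyc_gap d S s}"

definition cyclic_compositions :: "nat \<Rightarrow> nat set set" where
  "cyclic_compositions d = {S. S \<subseteq> {..<d} \<and> S \<noteq> {}}"

end

theory Submission
  imports Defs "HOL-Computational_Algebra.Formal_Power_Series"
begin
unbundle fps_syntax

lemma a1: "(n+1) * ((2*n) choose (n+1)) = n * ((2*n) choose n)"
proof -
  have x0: "(n+1) * ((2*n) choose (n+1)) = 2*n * ((2*n - 1) choose (n+1-1))"
    by (rule times_binomial_minus1_eq) simp
  have x: "(n+1) * ((2*n) choose (n+1)) = 2*n * ((2*n - 1) choose n)"
    using x0 by (simp only: add_diff_cancel_right')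
  have y: "(2*n - n) * ((2*n) choose n) = 2*n * ((2*n - 1) choose n)"
    by (rule binomial_absorb_comp)
  have z: "2*n - n = n" by simp
  show ?thesis using x y unfolding z by (rule trans[OF _ sym])
qed

lemma a2_aux:
  fixes n A P Q :: nat
  assumes 1: "(n+1)*A = (2*n+2)*P" and 2: "(n+1)*P = (2*n+1)*Q"
  shows "(n+1)*A = 2*(2*n+1)*Q"
proof -
  have "(n+1)*((n+1)*A) = (n+1)*((2*n+2)*P)" using 1 by simp
  also have "\<dots> = 2*(n+1)*((n+1)*P)" by (simp add: algebra_simps)
  also have "\<dots> = 2*(n+1)*((2*n+1)*Q)" using 2 by simp
  also have "\<dots> = (n+1)*(2*(2*n+1)*Q)" by (simp add: algebra_simps)
  finally have h: "(n+1)*((n+1)*A) = (n+1)*(2*(2*n+1)*Q)" .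
  show ?thesis using h by (rule mult_left_cancel[THEN iffD1, rotated]) simp
qed

lemma a2: "(n+1) * ((2*n+2) choose (n+1)) = 2*(2*n+1) * ((2*n) choose n)"
proof (rule a2_aux)
  show "(n+1) * ((2*n+2) choose (n+1)) = (2*n+2) * ((2*n+1) choose n)"
    using Suc_times_binomial[of n "2*n+1"] by (simp only: Suc_eq_plus1 add.assoc one_add_one)
  have y: "(2*n+1 - n) * ((2*n+1) choose n) = (2*n+1) * ((2*n+1 - 1) choose n)"
    by (rule binomial_absorb_comp)
  have z1: "2*n+1-n = n+1" by simp
  have z2: "2*n+1-1 = 2*n" by simp
  show "(n+1) * ((2*n+1) choose n) = (2*n+1) * ((2*n) choose n)"
    using y unfolding z1 z2 .
qed

lemma catalan_mult: "real (catalan n) * (real n + 1) = real ((2*n) choose n)"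
proof -
  define c where "c = ((2*n) choose n) - ((2*n) choose (n+1))"
  have le: "(n+1) * ((2*n) choose (n+1)) \<le> (n+1) * ((2*n) choose n)" using a1 by simp
  have eq: "(2*n) choose n = (n+1) * c"
    using a1 le unfolding c_def by (simp add: diff_mult_distrib2)
  have "catalan n = ((n+1) * c) div (n+1)"
    unfolding catalan_def using eq by (rule arg_cong)
  also have "((n+1) * c) div (n+1) = c" by (rule nonzero_mult_div_cancel_left) simp
  finally have "catalan n = c" .
  then have "catalan n * (n+1) = (2*n) choose n" using eq by (simp add: mult.commute)
  then show ?thesis by (metis of_nat_1 of_nat_add of_nat_mult)
qed

definition BB :: "real fps" where "BB = Abs_fps (\<lambda>n. real ((2*n) choose n))"
definition KK :: "real fps" where "KK = Abs_fps (\<lambda>n. if n = 0 then 0 else real (catalan (n - 1)))"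
definition SS :: "real fps" where "SS = (1 - 4 * fps_X) * BB"
definition Fa :: "real fps" where "Fa = fps_X + KK"

lemma E1: "(1 - 4 * fps_X) * fps_deriv BB = 2 * BB"
proof (rule fps_ext)
  fix n
  let ?D = "fps_deriv BB"
  have r0: "real ((n+1) * ((2*n+2) choose (n+1))) = real (2*(2*n+1) * ((2*n) choose n))"
    using a2[of n] by (rule arg_cong)
  have r: "real (n+1) * real ((2*(n+1)) choose (n+1)) = 2 * (2 * real n + 1) * real ((2*n) choose n)"
    using r0 by (simp add: algebra_simps)
  have e: "(1 - 4 * fps_X) * ?D = ?D - fps_const 4 * (fps_X * ?D)"
    by (simp add: algebra_simps numeral_fps_const)
  have "((1 - 4 * fps_X) * ?D) $ n = ?D $ n - 4 * (fps_X * ?D) $ n"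
    unfolding e by simp
  also have "\<dots> = real (n+1) * real ((2*(n+1)) choose (n+1)) - 4 * (real n * real ((2*n) choose n))"
    by (cases n) (simp_all add: BB_def)
  also have "\<dots> = 2 * real ((2*n) choose n)" using r by (simp add: algebra_simps)
  also have "\<dots> = (2 * BB) $ n" by (simp add: BB_def numeral_fps_const)
  finally show "((1 - 4 * fps_X) * ?D) $ n = (2 * BB) $ n" .
qed

lemma dS: "fps_deriv SS = - 2 * BB"
proof -
  have "fps_deriv SS = - 4 * BB + (1 - 4 * fps_X) * fps_deriv BB"
    unfolding SS_def by (simp add: algebra_simps)
  then show ?thesis using E1 by simp
qed

lemma E2: "SS * BB = 1"
proof -
  have "fps_deriv (SS * BB) = fps_deriv SS * BB + SS * fps_deriv BB" by simp
  also have "\<dots> = - 2 * BB * BB + BB * ((1 - 4 * fps_X) * fps_deriv BB)"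
    unfolding dS by (simp add: SS_def mult.assoc mult.left_commute)
  also have "\<dots> = 0" unfolding E1 by (simp add: algebra_simps)
  finally have "fps_deriv (SS * BB) = 0" .
  then have "SS * BB = fps_const ((SS * BB) $ 0)" by (rule fps_deriv_eq_0_iff[THEN iffD1])
  also have "(SS * BB) $ 0 = 1" by (simp add: SS_def BB_def)
  finally show ?thesis by simp
qed

lemma E3: "fps_deriv KK = BB"
proof (rule fps_ext)
  fix n show "fps_deriv KK $ n = BB $ n"
    using catalan_mult[of n] by (simp add: KK_def BB_def mult.commute add.commute)
qed

lemma E4: "2 * KK = 1 - SS"
proof -
  have "fps_deriv (2 * KK) = fps_deriv (1 - SS)" using E3 dS by simp
  then have "2 * KK = fps_const ((2 * KK) $ 0 - (1 - SS) $ 0) + (1 - SS)"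
    by (simp only: fps_deriv_eq_iff)
  moreover have "(2 * KK) $ 0 = 0" by (simp add: KK_def)
  moreover have "(1 - SS) $ 0 = 0" by (simp add: SS_def BB_def)
  ultimately show ?thesis by simp
qed

lemma Fa_nth: "Fa $ n = (if n = 0 then 0 else real (alpha n))"
  by (simp add: Fa_def KK_def alpha_def)

lemma key: "fps_X * (1 + BB) = (BB - 1) * (1 - Fa)"
proof -
  have S: "SS = BB - 4 * fps_X * BB" unfolding SS_def by (simp add: algebra_simps)
  have BS: "BB * SS = 1" using E2 by (simp add: mult.commute)
  have "2 * ((BB - 1) * (1 - Fa)) = (BB - 1) * (2 - 2 * fps_X - 2 * KK)"
    unfolding Fa_def by (simp add: algebra_simps)
  also have "\<dots> = (BB - 1) * (1 + SS - 2 * fps_X)" unfolding E4 by (simp add: algebra_simps)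
  also have "\<dots> = BB * SS + BB - 2 * fps_X * BB - 1 - SS + 2 * fps_X" by (simp add: algebra_simps)
  also have "\<dots> = BB - 2 * fps_X * BB - SS + 2 * fps_X" unfolding BS by (simp add: algebra_simps)
  also have "\<dots> = 2 * (fps_X * (1 + BB))" unfolding S by (simp add: algebra_simps)
  finally have "2 * ((BB - 1) * (1 - Fa)) = 2 * (fps_X * (1 + BB))" .
  then show ?thesis by simp
qed



definition ngap :: "nat set \<Rightarrow> nat \<Rightarrow> nat" where "ngap U s = (LEAST t. 0 < t \<and> s + t \<in> U)"
definition lw :: "(nat \<Rightarrow> 'a::comm_semiring_1) \<Rightarrow> nat set \<Rightarrow> 'a" where
  "lw f U = (\<Prod>s\<in>U - {Max U}. f (ngap U s))"
definition seg :: "nat \<Rightarrow> nat \<Rightarrow> nat set set" where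
  "seg a e = {U. U \<subseteq> {a..e} \<and> a \<in> U \<and> e \<in> U}"

lemma finite_seg: "finite (seg a e)"
  unfolding seg_def by (rule finite_subset[of _ "Pow {a..e}"]) auto

lemma seg_fin: "U \<in> seg a e \<Longrightarrow> finite U"
  unfolding seg_def using finite_subset by blast

lemma seg_same: "seg a a = {{a}}"
  unfolding seg_def by auto

lemma seg_Min: assumes "U \<in> seg a e" shows "Min U = a"
proof (rule Min_eqI)
  show "finite U" using seg_fin[OF assms] .
qed (use assms in \<open>auto simp: seg_def\<close>)

lemma seg_Max: assumes "U \<in> seg a e" shows "Max U = e"
proof (rule Max_eqI)
  show "finite U" using seg_fin[OF assms] .
qed (use assms in \<open>auto simp: seg_def\<close>)

lemma seg_split: assumes "a < e"
  shows "seg a e = (\<Union>b\<in>{a<..e}. insert a ` seg b e)"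
proof
  show "seg a e \<subseteq> (\<Union>b\<in>{a<..e}. insert a ` seg b e)"
  proof
    fix U assume U: "U \<in> seg a e"
    let ?V = "U - {a}"
    have fin: "finite ?V" using seg_fin[OF U] by simp
    have ne: "?V \<noteq> {}" using U assms unfolding seg_def by auto
    let ?b = "Min ?V"
    have bV: "?b \<in> ?V" using Min_in[OF fin ne] .
    have b1: "?b \<in> {a<..e}" using bV U unfolding seg_def by auto
    have mn: "\<forall>x\<in>?V. ?b \<le> x" using fin by auto
    have s1: "?V \<subseteq> {?b..e}"
    proof
      fix x assume "x \<in> ?V" then show "x \<in> {?b..e}" using mn U unfolding seg_def by auto
    qed
    have s2: "e \<in> ?V" using U assms unfolding seg_def by auto
    have b2: "?V \<in> seg ?b e" unfolding seg_def using s1 s2 bV by blast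
    have b3: "U = insert a ?V" using U unfolding seg_def by auto
    show "U \<in> (\<Union>b\<in>{a<..e}. insert a ` seg b e)" using b1 b2 b3 by blast
  qed
next
  show "(\<Union>b\<in>{a<..e}. insert a ` seg b e) \<subseteq> seg a e"
    unfolding seg_def by auto
qed

lemma lw_insert: assumes "a < b" "V \<in> seg b e"
  shows "lw f (insert a V) = f (b - a) * lw f V"
proof -
  have aV: "a \<notin> V" using assms unfolding seg_def by auto
  have fin: "finite V" using seg_fin[OF assms(2)] .
  have be: "b \<le> e" using assms unfolding seg_def by auto
  have MaxI: "Max (insert a V) = e"
  proof (rule Max_eqI)
    show "finite (insert a V)" using fin by simp
  qed (use assms be in \<open>auto simp: seg_def\<close>)
  have ae: "a \<noteq> e" using assms be by auto
  have eq1: "insert a V - {Max (insert a V)} = insert a (V - {Max V})"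
    using MaxI seg_Max[OF assms(2)] ae by auto
  have g1: "ngap (insert a V) a = b - a"
    unfolding ngap_def
  proof (rule Least_equality)
    show "0 < b - a \<and> a + (b - a) \<in> insert a V" using assms unfolding seg_def by auto
  next
    fix t assume "0 < t \<and> a + t \<in> insert a V"
    then have "a + t \<in> V" by auto
    then have "b \<le> a + t" using assms unfolding seg_def by auto
    then show "b - a \<le> t" by simp
  qed
  have g2: "ngap (insert a V) s = ngap V s" if "s \<in> V" for s
  proof -
    have "a < s" using that assms unfolding seg_def by auto
    then have "\<And>t. (0 < t \<and> s + t \<in> insert a V) = (0 < t \<and> s + t \<in> V)" by auto
    then show ?thesis unfolding ngap_def by simp
  qed
  have "lw f (insert a V) = (\<Prod>s\<in>insert a (V - {Max V}). f (ngap (insert a V) s))"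
    unfolding lw_def eq1 ..
  also have "\<dots> = f (ngap (insert a V) a) * (\<Prod>s\<in>V - {Max V}. f (ngap (insert a V) s))"
    using aV fin by (simp add: prod.insert)
  also have "\<dots> = f (b - a) * lw f V"
    unfolding lw_def g1 using g2 by (auto intro!: prod.cong)
  finally show ?thesis .
qed

lemma seg_sum:
  fixes f L :: "nat \<Rightarrow> 'a::comm_semiring_1"
  assumes L0: "L 0 = 1" and LS: "\<And>n. n > 0 \<Longrightarrow> L n = (\<Sum>k=1..n. f k * L (n - k))"
  shows "a \<le> e \<Longrightarrow> (\<Sum>U\<in>seg a e. lw f U) = L (e - a)"
proof (induction "e - a" arbitrary: a rule: less_induct)
  case less
  show ?case
  proof (cases "a = e")
    case True
    then show ?thesis by (simp add: seg_same lw_def L0)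
  next
    case False
    then have ae: "a < e" using less by auto
    have disj: "\<forall>b\<in>{a<..e}. \<forall>b'\<in>{a<..e}. b \<noteq> b' \<longrightarrow> insert a ` seg b e \<inter> insert a ` seg b' e = {}"
    proof (intro ballI impI)
      fix b b' assume "b \<noteq> b'" "b \<in> {a<..e}" "b' \<in> {a<..e}"
      then have "a < b" "a < b'" by auto
      show "insert a ` seg b e \<inter> insert a ` seg b' e = {}"
      proof (rule ccontr)
        assume "insert a ` seg b e \<inter> insert a ` seg b' e \<noteq> {}"
        then obtain V V' where V: "V \<in> seg b e" "V' \<in> seg b' e" "insert a V = insert a V'" by auto
        have "a \<notin> V" "a \<notin> V'" using V \<open>a<b\<close> \<open>a<b'\<close> unfolding seg_def by auto
        then have "V = V'" using V(3) by (metis insert_ident)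
        then show False using seg_Min[OF V(1)] seg_Min[OF V(2)] \<open>b\<noteq>b'\<close> by simp
      qed
    qed
    have "(\<Sum>U\<in>seg a e. lw f U) = (\<Sum>b\<in>{a<..e}. \<Sum>U\<in>insert a ` seg b e. lw f U)"
      unfolding seg_split[OF ae]
      by (rule sum.UNION_disjoint) (use disj finite_seg in auto)
    also have "\<dots> = (\<Sum>b\<in>{a<..e}. \<Sum>V\<in>seg b e. f (b - a) * lw f V)"
    proof (rule sum.cong[OF refl])
      fix b assume b: "b \<in> {a<..e}"
      have inj: "inj_on (insert a) (seg b e)"
      proof (rule inj_onI)
        fix V V' assume "V \<in> seg b e" "V' \<in> seg b e" "insert a V = insert a V'"
        moreover have "a \<notin> V" "a \<notin> V'" using calculation b unfolding seg_def by auto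
        ultimately show "V = V'" by (metis insert_ident)
      qed
      show "(\<Sum>U\<in>insert a ` seg b e. lw f U) = (\<Sum>V\<in>seg b e. f (b - a) * lw f V)"
        using sum.reindex[OF inj, of "lw f"] lw_insert[of a b _ e f] b by (auto intro!: sum.cong)
    qed
    also have "\<dots> = (\<Sum>b\<in>{a<..e}. f (b - a) * L (e - b))"
      by (rule sum.cong[OF refl]) (use less ae in \<open>auto simp: sum_distrib_left[symmetric]\<close>)
    also have "\<dots> = (\<Sum>k=1..e-a. f k * L (e - a - k))"
    proof -
      have "{a<..e} = (\<lambda>k. a + k) ` {1..e-a}"
      proof
        show "{a<..e} \<subseteq> (\<lambda>k. a + k) ` {1..e-a}"
        proof
          fix b assume "b \<in> {a<..e}"
          then show "b \<in> (\<lambda>k. a + k) ` {1..e-a}" by (intro image_eqI[where x="b - a"]) auto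
        qed
      qed auto
      then have "(\<Sum>b\<in>{a<..e}. f (b - a) * L (e - b)) = (\<Sum>b\<in>(\<lambda>k. a + k) ` {1..e-a}. f (b - a) * L (e - b))"
        by simp
      also have "\<dots> = (\<Sum>k\<in>{1..e-a}. f (a + k - a) * L (e - (a + k)))"
        by (subst sum.reindex) (auto simp: inj_on_def)
      finally show ?thesis by (simp add: diff_diff_add)
    qed
    also have "\<dots> = L (e - a)" using LS ae by simp
    finally show ?thesis .
  qed
qed


lemma gap_props:
  assumes S: "S \<subseteq> {..<d}" and s: "s \<in> S"
  shows "0 < cyc_gap d S s \<and> cyc_gap d S s \<le> d \<and> (s + cyc_gap d S s) mod d \<in> S"
proof -
  have d: "0 < d" using S s by auto
  have P: "0 < d \<and> (s + d) mod d \<in> S" using d s S by auto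
  have "0 < cyc_gap d S s \<and> (s + cyc_gap d S s) mod d \<in> S"
    unfolding cyc_gap_def by (rule LeastI[of _ d]) (rule P)
  moreover have "cyc_gap d S s \<le> d"
    unfolding cyc_gap_def by (rule Least_le) (rule P)
  ultimately show ?thesis by simp
qed

lemma card_part:
  assumes S: "S \<subseteq> {..<d}" and s: "s \<in> S"
  shows "card (cyc_part d S s) = cyc_gap d S s"
proof -
  let ?g = "cyc_gap d S s"
  have g: "?g \<le> d" using gap_props[OF S s] by simp
  have eq: "cyc_part d S s = (\<lambda>j. (s + j) mod d) ` {1..?g}"
    unfolding cyc_part_def by auto
  have inj: "inj_on (\<lambda>j. (s + j) mod d) {1..?g}"
  proof (rule inj_onI)
    fix j j' assume j: "j \<in> {1..?g}" "j' \<in> {1..?g}" and e: "(s + j) mod d = (s + j') mod d"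
    show "j = j'"
    proof (rule ccontr)
      assume ne: "j \<noteq> j'"
      {
        fix x y assume xy: "x \<in> {1..?g}" "y \<in> {1..?g}" "x < y" "(s + x) mod d = (s + y) mod d"
        then have "d dvd (s + y) - (s + x)" using mod_eq_dvd_iff_nat[of "s+x" "s+y" d] by simp
        then have "d dvd y - x" by simp
        moreover have "0 < y - x" "y - x < d" using xy g by auto
        ultimately have False using dvd_imp_le by fastforce
      }
      then show False using ne j e by (metis linorder_neqE_nat)
    qed
  qed
  show ?thesis unfolding eq using card_image[OF inj] by simp
qed

lemma gap_inner:
  assumes S: "S \<subseteq> {..<d}" and s: "s \<in> S" and fin: "finite S" and lt: "s < Max S"
  shows "cyc_gap d S s = ngap S s"
proof -
  have P: "0 < Max S - s \<and> s + (Max S - s) \<in> S" using lt s fin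
    by (metis Max_in add_diff_inverse_nat empty_iff not_less_iff_gr_or_eq zero_less_diff)
  let ?g = "ngap S s"
  have gI: "0 < ?g \<and> s + ?g \<in> S" unfolding ngap_def by (rule LeastI[of _ "Max S - s"]) (rule P)
  have gm: "\<And>t. t < ?g \<Longrightarrow> \<not> (0 < t \<and> s + t \<in> S)" unfolding ngap_def by (rule not_less_Least)
  have lt_d: "s + ?g < d" using gI S by auto
  show ?thesis unfolding cyc_gap_def
  proof (rule Least_equality)
    show "0 < ?g \<and> (s + ?g) mod d \<in> S" using gI lt_d by simp
  next
    fix t assume t: "0 < t \<and> (s + t) mod d \<in> S"
    show "?g \<le> t"
    proof (rule ccontr)
      assume "\<not> ?g \<le> t"
      then have "t < ?g" by simp
      moreover have "s + t < d" using \<open>t < ?g\<close> lt_d by simp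
      ultimately show False using gm[of t] t by simp
    qed
  qed
qed

lemma gap_outer:
  assumes S: "S \<subseteq> {..<d}" and ne: "S \<noteq> {}"
  shows "cyc_gap d S (Max S) = d + Min S - Max S"
proof -
  have fin: "finite S" using S finite_subset by blast
  have MS: "Max S \<in> S" "Min S \<in> S" using fin ne by auto
  have Md: "Max S < d" "Min S \<le> Max S" using MS S fin ne by auto
  show ?thesis unfolding cyc_gap_def
  proof (rule Least_equality)
    have "(Max S + (d + Min S - Max S)) mod d = Min S" using Md by simp
    then show "0 < d + Min S - Max S \<and> (Max S + (d + Min S - Max S)) mod d \<in> S" using Md MS by simp
  next
    fix t assume t: "0 < t \<and> (Max S + t) mod d \<in> S"
    show "d + Min S - Max S \<le> t"
    proof (rule ccontr)
      assume "\<not> d + Min S - Max S \<le> t"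
      then have tl: "Max S + t < d + Min S" using Md by simp
      show False
      proof (cases "Max S + t < d")
        case True
        then have "Max S + t \<in> S" using t by simp
        then have "Max S + t \<le> Max S" using fin by (rule Max_ge[rotated])
        then show False using t by simp
      next
        case False
        then have "(Max S + t) mod d = Max S + t - d" using tl Md
          by (simp add: le_mod_geq)
        then have "Max S + t - d \<in> S" using t by simp
        then have "Min S \<le> Max S + t - d" using fin by simp
        then show False using tl False by simp
      qed
    qed
  qed
qed

lemma weight:
  fixes f :: "nat \<Rightarrow> 'a::comm_semiring_1"
  assumes S: "S \<subseteq> {..<d}" and ne: "S \<noteq> {}"
  shows "(\<Prod>s\<in>S. f (card (cyc_part d S s))) = f (d + Min S - Max S) * lw f S"
proof -
  have fin: "finite S" using S finite_subset by blast
  have MS: "Max S \<in> S" using fin ne by auto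
  have "(\<Prod>s\<in>S. f (card (cyc_part d S s))) = (\<Prod>s\<in>S. f (cyc_gap d S s))"
    using card_part[OF S] by (auto intro!: prod.cong)
  also have "\<dots> = f (cyc_gap d S (Max S)) * (\<Prod>s\<in>S - {Max S}. f (cyc_gap d S s))"
    using prod.remove[OF fin MS] .
  also have "\<dots> = f (d + Min S - Max S) * lw f S"
    unfolding gap_outer[OF S ne] lw_def
    using gap_inner[OF S _ fin] fin by (auto intro!: prod.cong arg_cong[where f="(*) _"] simp: order.not_eq_order_implies_strict)
  finally show ?thesis .
qed


lemma cc_union: "cyclic_compositions d = (\<Union>M\<in>{..<d}. \<Union>m\<in>{..M}. seg m M)"
proof
  show "cyclic_compositions d \<subseteq> (\<Union>M\<in>{..<d}. \<Union>m\<in>{..M}. seg m M)"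
  proof
    fix S assume "S \<in> cyclic_compositions d"
    then have S: "S \<subseteq> {..<d}" "S \<noteq> {}" unfolding cyclic_compositions_def by auto
    have fin: "finite S" using S finite_subset by blast
    have MS: "Max S \<in> S" "Min S \<in> S" using fin S by auto
    have "S \<subseteq> {Min S..Max S}" using fin by auto
    then have "S \<in> seg (Min S) (Max S)" unfolding seg_def using MS by blast
    moreover have "Max S < d" "Min S \<le> Max S" using MS S fin by auto
    ultimately show "S \<in> (\<Union>M\<in>{..<d}. \<Union>m\<in>{..M}. seg m M)" by blast
  qed
next
  show "(\<Union>M\<in>{..<d}. \<Union>m\<in>{..M}. seg m M) \<subseteq> cyclic_compositions d"
    unfolding seg_def cyclic_compositions_def by fastforce
qed

lemma double_sum:
  fixes g :: "nat \<Rightarrow> 'a::comm_semiring_1"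
  shows "(\<Sum>M<N. \<Sum>m\<in>{..M}. g (M - m)) = (\<Sum>n\<in>{..N}. of_nat (N - n) * g n)"
proof (induction N)
  case 0 then show ?case by simp
next
  case (Suc N)
  have r: "(\<Sum>m\<in>{..N}. g (N - m)) = (\<Sum>n\<in>{..N}. g n)"
    using sum.atLeastAtMost_rev[of "\<lambda>m. g (N - m)" 0 N] by (simp add: atLeast0AtMost)
  have "(\<Sum>M<Suc N. \<Sum>m\<in>{..M}. g (M - m)) = (\<Sum>n\<in>{..N}. of_nat (N - n) * g n) + (\<Sum>n\<in>{..N}. g n)"
    using Suc r by simp
  also have "\<dots> = (\<Sum>n\<in>{..N}. of_nat (Suc N - n) * g n)"
    by (simp add: sum.distrib[symmetric] Suc_diff_le algebra_simps)
  also have "\<dots> = (\<Sum>n\<in>{..Suc N}. of_nat (Suc N - n) * g n)"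
    by simp
  finally show ?case .
qed

lemma cyc_sum:
  fixes f L :: "nat \<Rightarrow> 'a::comm_semiring_1"
  assumes L0: "L 0 = 1" and LS: "\<And>n. n > 0 \<Longrightarrow> L n = (\<Sum>k=1..n. f k * L (n - k))"
  shows "(\<Sum>S\<in>cyclic_compositions d. \<Prod>s\<in>S. f (card (cyc_part d S s)))
        = (\<Sum>i=0..d. of_nat i * f i * L (d - i))"
proof -
  let ?w = "\<lambda>S. \<Prod>s\<in>S. f (card (cyc_part d S s))"
  have inner: "(\<Sum>S\<in>(\<Union>m\<in>{..M}. seg m M). ?w S) = (\<Sum>m\<in>{..M}. \<Sum>S\<in>seg m M. ?w S)" for M
  proof (rule sum.UNION_disjoint)
    show "\<forall>i\<in>{..M}. \<forall>j\<in>{..M}. i \<noteq> j \<longrightarrow> seg i M \<inter> seg j M = {}"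
      using seg_Min by blast
  qed (auto simp: finite_seg)
  have "(\<Sum>S\<in>cyclic_compositions d. ?w S) = (\<Sum>M<d. \<Sum>S\<in>(\<Union>m\<in>{..M}. seg m M). ?w S)"
    unfolding cc_union
  proof (rule sum.UNION_disjoint)
    show "\<forall>i\<in>{..<d}. \<forall>j\<in>{..<d}. i \<noteq> j \<longrightarrow> (\<Union>m\<in>{..i}. seg m i) \<inter> (\<Union>m\<in>{..j}. seg m j) = {}"
      using seg_Max by blast
  qed (auto simp: finite_seg)
  also have "\<dots> = (\<Sum>M<d. \<Sum>m\<in>{..M}. \<Sum>S\<in>seg m M. f (d + m - M) * lw f S)"
  proof (rule sum.cong[OF refl], unfold inner, rule sum.cong[OF refl], rule sum.cong[OF refl])
    fix M m S assume M: "M \<in> {..<d}" and m: "m \<in> {..M}" and S: "S \<in> seg m M"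
    have "S \<subseteq> {..<d}" "S \<noteq> {}" using M S unfolding seg_def by auto
    then show "?w S = f (d + m - M) * lw f S"
      using weight[of S d f] seg_Min[OF S] seg_Max[OF S] by simp
  qed
  also have "\<dots> = (\<Sum>M<d. \<Sum>m\<in>{..M}. f (d - (M - m)) * L (M - m))"
    by (intro sum.cong refl) (auto simp: sum_distrib_left[symmetric] seg_sum[OF L0 LS])
  also have "\<dots> = (\<Sum>n\<in>{..d}. of_nat (d - n) * (f (d - n) * L n))"
    by (rule double_sum)
  also have "\<dots> = (\<Sum>i=0..d. of_nat i * f i * L (d - i))"
    using sum.atLeastAtMost_rev[of "\<lambda>n. of_nat (d - n) * (f (d - n) * L n)" 0 d]
    by (simp add: atLeast0AtMost mult.assoc)
  finally show ?thesis .
qed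


theorem lemma3p3:
  fixes d :: nat
  assumes "d \<ge> 1"
  shows "(2*d) choose d = (\<Sum>S\<in>cyclic_compositions d. \<Prod>s\<in>S. alpha (card (cyc_part d S s)))"
proof -
  define Lin where "Lin = inverse (1 - Fa)"
  define f where "f = (\<lambda>i. real (alpha i))"
  define L where "L = (\<lambda>n. Lin $ n)"
  have F0: "(1 - Fa) $ 0 = 1" by (simp add: Fa_nth)
  have inv: "(1 - Fa) * Lin = 1" unfolding Lin_def by (rule inverse_mult_eq_1') (simp only: F0 one_neq_zero not_False_eq_True)
  have L0: "L 0 = 1" unfolding L_def Lin_def using F0 by simp
  have LS: "L n = (\<Sum>k=1..n. f k * L (n - k))" if n: "n > 0" for n
  proof -
    have "((1 - Fa) * Lin) $ n = 0" using inv n by simp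
    then have "Lin $ n = (Fa * Lin) $ n" by (simp add: algebra_simps)
    also have "\<dots> = (\<Sum>i=0..n. Fa $ i * Lin $ (n - i))" by (rule fps_mult_nth)
    also have "\<dots> = (\<Sum>i=Suc 0..n. Fa $ i * Lin $ (n - i))"
      by (subst sum.atLeast_Suc_atMost) (simp_all add: Fa_nth)
    also have "\<dots> = (\<Sum>k=1..n. f k * L (n - k))"
      by (intro sum.cong refl) (auto simp: Fa_nth f_def L_def)
    finally show ?thesis unfolding L_def .
  qed
  have dF: "fps_deriv Fa = 1 + BB" unfolding Fa_def using E3 by simp
  have main: "fps_X * fps_deriv Fa * Lin = BB - 1"
  proof -
    have "fps_X * fps_deriv Fa * Lin = (BB - 1) * ((1 - Fa) * Lin)"
      unfolding dF key by (simp add: mult.assoc)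
    then show ?thesis using inv by simp
  qed
  have d0: "d \<noteq> 0" using assms by simp
  have "real ((2*d) choose d) = (BB - 1) $ d" using d0 by (simp add: BB_def)
  also have "\<dots> = (fps_X * fps_deriv Fa * Lin) $ d" using main by simp
  also have "\<dots> = (\<Sum>i=0..d. (fps_X * fps_deriv Fa) $ i * Lin $ (d - i))" by (rule fps_mult_nth)
  also have "\<dots> = (\<Sum>i=0..d. of_nat i * f i * L (d - i))"
  proof (intro sum.cong refl)
    fix i assume "i \<in> {0..d}"
    show "(fps_X * fps_deriv Fa) $ i * Lin $ (d - i) = of_nat i * f i * L (d - i)"
      by (cases i) (simp_all add: Fa_nth f_def L_def)
  qed
  also have "\<dots> = (\<Sum>S\<in>cyclic_compositions d. \<Prod>s\<in>S. f (card (cyc_part d S s)))"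
    by (rule cyc_sum[OF L0 LS, symmetric]) simp
  also have "\<dots> = real (\<Sum>S\<in>cyclic_compositions d. \<Prod>s\<in>S. alpha (card (cyc_part d S s)))"
    by (simp add: f_def)
  finally show ?thesis by (simp only: of_nat_eq_iff)
qed

end
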